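(* Let $(\boldsymbol{X},S,L,A,R)$ be as in the context, fix $l\in\mathcal{L}$ and $\epsilon\ge0$. For $\omega\in\mathbb{R}$ let $f^*_{l,\omega}$ be a decision function with $I\{f^*_{l,\omega}(\boldsymbol{Z})>0\}=I\{\delta_R(\boldsymbol{Z})-\omega I(L=l)\psi_l(S)>0\}$, and define $$G_l(\omega)=E\big[I(f^*_{l,\omega}(\boldsymbol{Z})>0)I(L=l)\psi_l(S)\big],\qquad V_l(\omega)=E\big[I(f^*_{l,\omega}(\boldsymbol{Z})>0)\delta_R(\boldsymbol{Z})\big].$$ Assume $G_l$ is continuous on $\mathbb{R}$ and conditions (C1) and (C4) below hold. Then: $G_l(\omega)$ is non-increasing in $\omega\in\mathbb{R}$; $V_l(\omega)$ is non-decreasing for $\omega\le0$ and non-increasing for $\omega>0$. Moreover, for a sufficiently large constant $K>0$: if $G_l(0)>\epsilon$, there exists $\omega^*_l\in(0,K)$ with $G_l(\omega^*_l)=\epsilon$; if $G_l(0)<-\epsilon$, there exists $\omega^*_l\in(-K,0)$ with $G_l(\omega^*_l)=-\epsilon$. (C1): $P(S=s\mid L=l)>c_0>0$ for all $s\in\{0,1\}$, $l\in\mathcal{L}$. (C4): the functions $f_0(\boldsymbol{z})=E(R\mid\boldsymbol{Z}=\boldsymbol{z},A=-1)$ and $f_1(\boldsymbol{z})=E(R\mid\boldsymbol{Z}=\boldsymbol{z},A=1)$ belong to the Hölder class $\mathcal{H}^\beta([0,1]^d,B_0)$ with $d=p+2$.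
   Context: $\boldsymbol{X}\in\mathbb{R}^p$ covariates, $S\in\{0,1\}$ sensitive attribute, $L$ categorical feature with finite range $\mathcal{L}$, $A\in\{1,-1\}$ treatment, $R$ outcome, $\boldsymbol{Z}=(\boldsymbol{X},S,L)$ (taking values in $[0,1]^d$, $d=p+2$, for (C4)). $\pi(s\mid l)=P(S=s\mid L=l)$, $\psi_l(S)=\frac{I(S=1)}{\pi(1\mid l)}-\frac{I(S=0)}{\pi(0\mid l)}$, $\delta_R(\boldsymbol{Z})=E[R\mid\boldsymbol{Z},A=1]-E[R\mid\boldsymbol{Z},A=-1]$. Hölder class: for $\beta=s+r$, $r\in(0,1]$, $s=\lfloor\beta\rfloor$ (largest integer strictly smaller than $\beta$), $\mathcal{H}^\beta([0,1]^d,B_0)$ is the set of $f:[0,1]^d\to\mathbb{R}$ with $\max_{\|\alpha\|_1\le s}\|\partial^\alpha f\|_\infty\le B_0$ and $\max_{\|\alpha\|_1=s}\sup_{x\ne y}|\partial^\alpha f(x)-\partial^\alpha f(y)|/\|x-y\|_2^r\le B_0$. *)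

theory Defs
  imports "HOL-Probability.Probability"
begin

definition unit_cube :: "(real^'d) set" where
  "unit_cube = {x. \<forall>i. 0 \<le> x$i \<and> x$i \<le> 1}"

text \<open>Hoelder class H^beta([0,1]^d, B0). s = largest integer strictly smaller than beta,
  r = beta - s in (0,1]. D alpha stands for the partial derivative of order alpha
  (multi-index alpha :: 'd => nat, |alpha| = sum of entries); partial derivatives are
  taken within the cube (one-sided at the boundary).\<close>
definition holder_class :: "real \<Rightarrow> real \<Rightarrow> (real^'d \<Rightarrow> real) \<Rightarrow> bool" where
  "holder_class \<beta> B0 f \<longleftrightarrow>
    (let s = nat (\<lceil>\<beta>\<rceil> - 1); r = \<beta> - real s in
     \<exists>D :: ('d \<Rightarrow> nat) \<Rightarrow> real^'d \<Rightarrow> real.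
       (\<forall>x\<in>unit_cube. D (\<lambda>_. 0) x = f x) \<and>
       (\<forall>\<alpha> i. sum \<alpha> UNIV < s \<longrightarrow> (\<forall>x\<in>unit_cube.
          ((\<lambda>t. D \<alpha> (x + t *\<^sub>R axis i 1)) has_real_derivative D (\<alpha>(i := \<alpha> i + 1)) x)
            (at 0 within {t. x + t *\<^sub>R axis i 1 \<in> unit_cube}))) \<and>
       (\<forall>\<alpha>. sum \<alpha> UNIV \<le> s \<longrightarrow> (\<forall>x\<in>unit_cube. \<bar>D \<alpha> x\<bar> \<le> B0)) \<and>
       (\<forall>\<alpha>. sum \<alpha> UNIV = s \<longrightarrow> (\<forall>x\<in>unit_cube. \<forall>y\<in>unit_cube.
          \<bar>D \<alpha> x - D \<alpha> y\<bar> \<le> B0 * norm (x - y) powr r)))"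

text \<open>Z = (X, S, L) as a vector in R^(p+2), indexed by the type 'p + bool
  (Inl j: j-th coordinate of X; Inr False: S; Inr True: L).\<close>
definition Zvec :: "real^'p \<Rightarrow> real \<Rightarrow> real \<Rightarrow> real^('p + bool)" where
  "Zvec x s l = (\<chi> i. case i of Inl j \<Rightarrow> x$j | Inr b \<Rightarrow> (if b then l else s))"

definition cprob :: "'w measure \<Rightarrow> ('w \<Rightarrow> real) \<Rightarrow> ('w \<Rightarrow> real) \<Rightarrow> real \<Rightarrow> real \<Rightarrow> real" where
  "cprob M S L s l =
     measure M {w\<in>space M. S w = s \<and> L w = l} / measure M {w\<in>space M. L w = l}"

definition psi :: "'w measure \<Rightarrow> ('w \<Rightarrow> real) \<Rightarrow> ('w \<Rightarrow> real) \<Rightarrow> real \<Rightarrow> real \<Rightarrow> real" where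
  "psi M S L l s = (if s = 1 then 1 / cprob M S L 1 l else 0) - (if s = 0 then 1 / cprob M S L 0 l else 0)"

definition Gfun :: "'w measure \<Rightarrow> ('w \<Rightarrow> real) \<Rightarrow> ('w \<Rightarrow> real) \<Rightarrow> ('w \<Rightarrow> 'z)
    \<Rightarrow> (real \<Rightarrow> 'z \<Rightarrow> real) \<Rightarrow> real \<Rightarrow> real \<Rightarrow> real" where
  "Gfun M S L Z f l \<omega> = (\<integral>w. (if f \<omega> (Z w) > 0 then 1 else 0) * (if L w = l then 1 else 0)
       * psi M S L l (S w) \<partial>M)"

definition Vfun :: "'w measure \<Rightarrow> ('w \<Rightarrow> 'z) \<Rightarrow> (real \<Rightarrow> 'z \<Rightarrow> real) \<Rightarrow> ('z \<Rightarrow> real)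
    \<Rightarrow> real \<Rightarrow> real" where
  "Vfun M Z f \<delta> \<omega> = (\<integral>w. (if f \<omega> (Z w) > 0 then 1 else 0) * \<delta> (Z w) \<partial>M)"

end

theory Submission
  imports Defs
begin


lemma holder_cont_gen:
  fixes f :: "'a::real_normed_vector \<Rightarrow> real"
  assumes r: "r > 0" and C: "C \<ge> 0"
    and h: "\<forall>x\<in>U. \<forall>y\<in>U. \<bar>f x - f y\<bar> \<le> C * norm (x - y) powr r"
  shows "continuous_on U f"
  unfolding continuous_on_iff
proof (intro ballI allI impI)
  fix x e assume x: "x \<in> U" and e: "(0::real) < e"
  define d where "d = (e / (C + 1)) powr (1 / r)"
  have d: "d > 0" using e C by (simp add: d_def)
  show "\<exists>d>0. \<forall>x'\<in>U. dist x' x < d \<longrightarrow> dist (f x') (f x) < e"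
  proof (intro exI[of _ d] conjI ballI impI d)
    fix y assume y: "y \<in> U" and dy: "dist y x < d"
    have "norm (y - x) powr r < d powr r"
      using dy r by (simp add: dist_norm powr_less_mono2)
    also have "d powr r = e / (C + 1)" using e C r
      by (simp add: d_def powr_powr)
    finally have lt: "norm (y - x) powr r < e / (C + 1)" .
    have "C * norm (y - x) powr r \<le> C * (e / (C+1))" using lt C
      by (intro mult_left_mono) auto
    also have "\<dots> < e" using C e by (simp add: field_simps)
    finally show "dist (f y) (f x) < e" using h x y by (smt (verit) dist_real_def)
  qed
qed

lemma cube_zero: "(0::real^'d) \<in> unit_cube" by (simp add: unit_cube_def)

lemma axis_T:
  fixes x :: "real^'d"
  assumes "x \<in> unit_cube"
  shows "{t. x + t *\<^sub>R axis i 1 \<in> unit_cube} = {- x$i .. 1 - x$i}"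
  using assms unfolding unit_cube_def
  by (auto simp: axis_def)

lemma axis_lip:
  fixes g g' :: "real^'d \<Rightarrow> real"
  assumes der: "\<forall>y\<in>unit_cube. ((\<lambda>t. g (y + t *\<^sub>R axis i 1)) has_real_derivative g' y)
            (at 0 within {t. y + t *\<^sub>R axis i 1 \<in> unit_cube})"
    and bd: "\<forall>y\<in>unit_cube. \<bar>g' y\<bar> \<le> B"
    and x: "x \<in> unit_cube" and xt: "x + t *\<^sub>R axis i 1 \<in> unit_cube"
  shows "\<bar>g (x + t *\<^sub>R axis i 1) - g x\<bar> \<le> B * \<bar>t\<bar>"
proof -
  define T where "T = {t. x + t *\<^sub>R axis i 1 \<in> unit_cube}"
  have cT: "convex T" unfolding T_def using axis_T[OF x] by simp
  have D: "((\<lambda>t. g (x + t *\<^sub>R axis i 1)) has_field_derivative g' (x + t0 *\<^sub>R axis i 1)) (at t0 within T)"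
    if t0: "t0 \<in> T" for t0
  proof -
    define y where "y = x + t0 *\<^sub>R axis i 1"
    have y: "y \<in> unit_cube" using t0 by (simp add: T_def y_def)
    have "((\<lambda>u. g (x + (t0 + u) *\<^sub>R axis i 1)) has_field_derivative g' y)
            (at 0 within {u. y + u *\<^sub>R axis i 1 \<in> unit_cube})"
      using bspec[OF der y] unfolding y_def by (simp add: scaleR_add_left add.assoc)
    then have "((\<lambda>t. g (x + t *\<^sub>R axis i 1)) has_field_derivative g' y)
        (at (t0 + 0) within (+) t0 ` {u. y + u *\<^sub>R axis i 1 \<in> unit_cube})"
      using DERIV_at_within_shift[where f="\<lambda>t. g (x + t *\<^sub>R axis i 1)" and z=t0 and x=0] by simp
    moreover have "(+) t0 ` {u. y + u *\<^sub>R axis i 1 \<in> unit_cube} = T"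
    proof -
      have "(+) t0 ` {u. y + u *\<^sub>R axis i 1 \<in> unit_cube} = {t. y + (t - t0) *\<^sub>R axis i 1 \<in> unit_cube}"
        by (auto simp: image_iff intro!: exI[where x="_ - t0"])
      also have "\<dots> = T" by (simp add: T_def y_def scaleR_diff_left algebra_simps)
      finally show ?thesis .
    qed
    ultimately show ?thesis by (simp add: y_def)
  qed
  have "norm (g (x + t *\<^sub>R axis i 1) - g (x + 0 *\<^sub>R axis i 1)) \<le> B * norm (t - 0)"
    apply (rule field_differentiable_bound[OF cT D])
    using bd by (auto simp: T_def x xt)
  then show ?thesis by simp
qed

lemma coord_chain:
  fixes g :: "real^'d \<Rightarrow> real"
  assumes lip: "\<forall>i. \<forall>x\<in>unit_cube. \<forall>t. x + t *\<^sub>R axis i 1 \<in> unit_cube \<longrightarrow>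
        \<bar>g (x + t *\<^sub>R axis i 1) - g x\<bar> \<le> B * \<bar>t\<bar>"
    and x: "x \<in> unit_cube" and y: "y \<in> unit_cube"
  shows "\<bar>g y - g x\<bar> \<le> B * (\<Sum>i\<in>UNIV. \<bar>y$i - x$i\<bar>)"
proof -
  define mix where "mix J = (\<chi> i. if i \<in> J then y$i else x$i)" for J
  have mc: "mix J \<in> unit_cube" for J
    using x y unfolding unit_cube_def mix_def by auto
  have ind: "\<bar>g (mix J) - g x\<bar> \<le> B * (\<Sum>i\<in>J. \<bar>y$i - x$i\<bar>)" if "finite J" for J
    using that
  proof (induction J rule: finite_induct)
    case empty
    have "mix {} = x" by (simp add: mix_def vec_eq_iff)
    then show ?case by simp
  next
    case (insert i J)
    have eq: "mix (insert i J) = mix J + (y$i - x$i) *\<^sub>R axis i 1"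
      using insert(2) by (auto simp: mix_def vec_eq_iff axis_def)
    have "\<bar>g (mix (insert i J)) - g (mix J)\<bar> \<le> B * \<bar>y$i - x$i\<bar>"
      using lip mc[of J] mc[of "insert i J"] unfolding eq by blast
    then show ?case using insert by (simp add: distrib_left)
  qed
  have mU: "mix UNIV = y" by (simp add: mix_def vec_eq_iff)
  show ?thesis using ind[of UNIV] by (simp add: mU)
qed

lemma holder_props:
  fixes f :: "real^'d \<Rightarrow> real"
  assumes b: "\<beta> > 0" and h: "holder_class \<beta> B0 f"
  shows "0 \<le> B0" "\<forall>x\<in>unit_cube. \<bar>f x\<bar> \<le> B0" "continuous_on unit_cube f"
proof -
  define s where "s = nat (\<lceil>\<beta>\<rceil> - 1)"
  define r where "r = \<beta> - real s"
  obtain D :: "('d \<Rightarrow> nat) \<Rightarrow> real^'d \<Rightarrow> real" where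
    D0: "\<forall>x\<in>unit_cube. D (\<lambda>_. 0) x = f x" and
    Dd: "\<forall>\<alpha> i. sum \<alpha> UNIV < s \<longrightarrow> (\<forall>x\<in>unit_cube.
          ((\<lambda>t. D \<alpha> (x + t *\<^sub>R axis i 1)) has_real_derivative D (\<alpha>(i := \<alpha> i + 1)) x)
            (at 0 within {t. x + t *\<^sub>R axis i 1 \<in> unit_cube}))" and
    Db: "\<forall>\<alpha>. sum \<alpha> UNIV \<le> s \<longrightarrow> (\<forall>x\<in>unit_cube. \<bar>D \<alpha> x\<bar> \<le> B0)" and
    Dh: "\<forall>\<alpha>. sum \<alpha> UNIV = s \<longrightarrow> (\<forall>x\<in>unit_cube. \<forall>y\<in>unit_cube.
          \<bar>D \<alpha> x - D \<alpha> y\<bar> \<le> B0 * norm (x - y) powr r)"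
    using h unfolding holder_class_def Let_def s_def r_def by blast
  have Db0: "\<forall>x\<in>unit_cube. \<bar>D (\<lambda>_. 0) x\<bar> \<le> B0"
    using spec[OF Db, of "\<lambda>_. 0"] by simp
  show bd: "\<forall>x\<in>unit_cube. \<bar>f x\<bar> \<le> B0" using D0 Db0 by simp
  then show B0: "0 \<le> B0" using cube_zero by force
  show "continuous_on unit_cube f"
  proof (cases "s = 0")
    case True
    have "r = \<beta>" using True by (simp add: r_def)
    then have "\<forall>x\<in>unit_cube. \<forall>y\<in>unit_cube. \<bar>f x - f y\<bar> \<le> B0 * norm (x - y) powr \<beta>"
      using spec[OF Dh, of "\<lambda>_. 0"] True D0 by simp
    then show ?thesis using holder_cont_gen[OF b B0] by blast
  next
    case False
    have der: "\<forall>y\<in>unit_cube. ((\<lambda>t. D (\<lambda>_. 0) (y + t *\<^sub>R axis i 1)) has_real_derivative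
         D ((\<lambda>_. 0)(i := 1)) y) (at 0 within {t. y + t *\<^sub>R axis i 1 \<in> unit_cube})" for i
      using spec[OF spec[OF Dd, of "\<lambda>_. 0"], of i] False by simp
    have sum1: "sum ((\<lambda>_. 0::nat)(i := 1)) UNIV = 1" for i :: 'd
      by (simp add: sum.delta' fun_upd_def)
    have bd1: "\<forall>y\<in>unit_cube. \<bar>D ((\<lambda>_. 0)(i := 1)) y\<bar> \<le> B0" for i
      using spec[OF Db, of "(\<lambda>_. 0)(i := 1)"] False sum1[of i] by simp
    have lip: "\<forall>i. \<forall>x\<in>unit_cube. \<forall>t. x + t *\<^sub>R axis i 1 \<in> unit_cube \<longrightarrow>
        \<bar>D (\<lambda>_. 0) (x + t *\<^sub>R axis i 1) - D (\<lambda>_. 0) x\<bar> \<le> B0 * \<bar>t\<bar>"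
      using axis_lip[OF der bd1] by blast
    have "\<bar>f x - f y\<bar> \<le> (B0 * CARD('d)) * norm (x - y) powr 1"
      if x: "x \<in> unit_cube" and y: "y \<in> unit_cube" for x y
    proof -
      have s1: "\<bar>f x - f y\<bar> \<le> B0 * (\<Sum>i\<in>UNIV. \<bar>x$i - y$i\<bar>)"
        using coord_chain[OF lip y x] D0 x y by simp
      have "(\<Sum>i\<in>UNIV. \<bar>x$i - y$i\<bar>) \<le> (\<Sum>i\<in>(UNIV::'d set). norm (x - y))"
        by (intro sum_mono) (metis component_le_norm_cart vector_minus_component real_norm_def)
      then have s2: "(\<Sum>i\<in>UNIV. \<bar>x$i - y$i\<bar>) \<le> CARD('d) * norm (x - y)" by simp
      have "B0 * (\<Sum>i\<in>UNIV. \<bar>x$i - y$i\<bar>) \<le> B0 * (CARD('d) * norm (x - y))"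
        by (rule mult_left_mono[OF s2 B0])
      then show ?thesis using s1 by simp
    qed
    then show ?thesis
      by (intro holder_cont_gen[where r=1 and C="B0 * CARD('d)"]) (use B0 in auto)
  qed
qed



lemma Gpt:
  fixes d c w1 w2 :: real
  assumes "w1 \<le> w2"
  shows "(if d - w2 * c > 0 then 1 else 0) * c \<le> (if d - w1 * c > 0 then 1 else 0) * c"
proof (cases "c \<ge> 0")
  case True
  have "w1 * c \<le> w2 * c" using assms True by (rule mult_right_mono)
  then show ?thesis using True by (simp only: split: if_split) (smt (verit))
next
  case False
  have "w2 * c \<le> w1 * c" using assms False by (intro mult_right_mono_neg) auto
  then show ?thesis using False by (simp only: split: if_split) (smt (verit))
qed

lemma Vneg:
  fixes d c w1 w2 :: real
  assumes "w1 \<le> w2" "w2 \<le> 0"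
  shows "(if d - w1 * c > 0 then 1 else 0) * d \<le> (if d - w2 * c > 0 then 1 else 0) * d"
proof (cases "c \<ge> 0")
  case True
  have "w1 * c \<le> w2 * c" using assms(1) True by (rule mult_right_mono)
  moreover have "w2 * c \<le> 0" using assms(2) True by (rule mult_nonpos_nonneg)
  ultimately show ?thesis by (simp only: split: if_split) (smt (verit))
next
  case False
  have "w2 * c \<le> w1 * c" using assms False by (intro mult_right_mono_neg) auto
  moreover have "w2 * c \<ge> 0" using assms(2) False by (intro mult_nonpos_nonpos) auto
  ultimately show ?thesis by (simp only: split: if_split) (smt (verit))
qed

lemma Vpos:
  fixes d c w1 w2 :: real
  assumes "0 < w1" "w1 \<le> w2"
  shows "(if d - w2 * c > 0 then 1 else 0) * d \<le> (if d - w1 * c > 0 then 1 else 0) * d"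
proof (cases "c \<ge> 0")
  case True
  have "w1 * c \<le> w2 * c" using assms(2) True by (rule mult_right_mono)
  moreover have "w1 * c \<ge> 0" using assms(1) True by simp
  ultimately show ?thesis by (simp only: split: if_split) (smt (verit))
next
  case False
  have "w2 * c \<le> w1 * c" using assms False by (intro mult_right_mono_neg) auto
  moreover have "w1 * c \<le> 0" using assms(1) False by (intro mult_nonneg_nonpos) auto
  ultimately show ?thesis by (simp only: split: if_split) (smt (verit))
qed

lemma Gbig:
  fixes d c w B :: real
  assumes "c = 0 \<or> c \<ge> 1 \<or> c \<le> -1" "\<bar>d\<bar> \<le> B" "w > B"
  shows "(if d - w * c > 0 then 1 else 0) * c \<le> 0"
proof -
  have "B \<ge> 0" using assms(2) by linarith
  have "w * 1 \<le> w * c" if "c \<ge> 1" using assms that \<open>B \<ge> 0\<close> by (intro mult_left_mono) auto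
  then show ?thesis using assms by (simp only: split: if_split) (smt (verit))
qed

lemma Gsmall:
  fixes d c w B :: real
  assumes "c = 0 \<or> c \<ge> 1 \<or> c \<le> -1" "\<bar>d\<bar> \<le> B" "w < - B"
  shows "(if d - w * c > 0 then 1 else 0) * c \<ge> 0"
proof -
  have "B \<ge> 0" using assms(2) by linarith
  have "w * (-1) \<le> w * c" if "c \<le> -1" using assms that \<open>B \<ge> 0\<close> by (intro mult_left_mono_neg) auto
  then show ?thesis using assms by (simp only: split: if_split) (smt (verit))
qed

theorem lemma1:
  fixes M :: "'w measure"
    and X :: "'w \<Rightarrow> real^'p" and S L A R :: "'w \<Rightarrow> real"
    and \<L> :: "real set" and l \<epsilon> c0 \<beta> B0 :: real
    and f0 f1 :: "real^('p + bool) \<Rightarrow> real"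
    and f :: "real \<Rightarrow> real^('p + bool) \<Rightarrow> real"
  defines "Z \<equiv> (\<lambda>w. Zvec (X w) (S w) (L w))"
    and "\<delta> \<equiv> (\<lambda>z. f1 z - f0 z)"
  assumes prob: "prob_space M"
    and meas: "X \<in> borel_measurable M" "S \<in> borel_measurable M" "L \<in> borel_measurable M"
      "A \<in> borel_measurable M" "R \<in> borel_measurable M"
    and R_int: "integrable M R"
    and S_vals: "\<forall>w\<in>space M. S w \<in> {0, 1}"
    and A_vals: "\<forall>w\<in>space M. A w \<in> {1, -1}"
    and L_fin: "finite \<L>" and L_vals: "\<forall>w\<in>space M. L w \<in> \<L>"
    and Z_cube: "\<forall>w\<in>space M. Z w \<in> unit_cube"
    and f1_ce: "\<forall>B\<in>sets borel.
        (\<integral>w. indicator {w\<in>space M. A w = 1 \<and> Z w \<in> B} w * R w \<partial>M)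
      = (\<integral>w. indicator {w\<in>space M. A w = 1 \<and> Z w \<in> B} w * f1 (Z w) \<partial>M)"
    and f0_ce: "\<forall>B\<in>sets borel.
        (\<integral>w. indicator {w\<in>space M. A w = -1 \<and> Z w \<in> B} w * R w \<partial>M)
      = (\<integral>w. indicator {w\<in>space M. A w = -1 \<and> Z w \<in> B} w * f0 (Z w) \<partial>M)"
    and l_in: "l \<in> \<L>" and eps: "\<epsilon> \<ge> 0"
    and f_dec: "\<forall>\<omega>. \<forall>w\<in>space M. (f \<omega> (Z w) > 0) \<longleftrightarrow>
        (\<delta> (Z w) - \<omega> * (if L w = l then 1 else 0) * psi M S L l (S w) > 0)"
    and G_cont: "continuous_on UNIV (Gfun M S L Z f l)"
    and C1: "c0 > 0" "\<forall>s\<in>{0, 1}. \<forall>l'\<in>\<L>. cprob M S L s l' > c0"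
    and C4: "\<beta> > 0" "holder_class \<beta> B0 f0" "holder_class \<beta> B0 f1"
  shows "(\<forall>\<omega>1 \<omega>2. \<omega>1 \<le> \<omega>2 \<longrightarrow> Gfun M S L Z f l \<omega>2 \<le> Gfun M S L Z f l \<omega>1)
    \<and> (\<forall>\<omega>1 \<omega>2. \<omega>1 \<le> \<omega>2 \<and> \<omega>2 \<le> 0 \<longrightarrow> Vfun M Z f \<delta> \<omega>1 \<le> Vfun M Z f \<delta> \<omega>2)
    \<and> (\<forall>\<omega>1 \<omega>2. 0 < \<omega>1 \<and> \<omega>1 \<le> \<omega>2 \<longrightarrow> Vfun M Z f \<delta> \<omega>2 \<le> Vfun M Z f \<delta> \<omega>1)
    \<and> (\<exists>K > 0.
         (Gfun M S L Z f l 0 > \<epsilon> \<longrightarrow> (\<exists>\<omega>\<in>{0<..<K}. Gfun M S L Z f l \<omega> = \<epsilon>))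
       \<and> (Gfun M S L Z f l 0 < - \<epsilon> \<longrightarrow> (\<exists>\<omega>\<in>{-K<..<0}. Gfun M S L Z f l \<omega> = - \<epsilon>)))"
proof -
  interpret P: prob_space M by (rule prob)
  note h0 = holder_props[OF C4(1) C4(2)]
  note h1 = holder_props[OF C4(1) C4(3)]
  define clamp :: "real^('p + bool) \<Rightarrow> real^('p + bool)"
    where "clamp x = (\<chi> i. max 0 (min 1 (x$i)))" for x
  have clamp_cube: "clamp x \<in> unit_cube" for x
    by (simp add: clamp_def unit_cube_def)
  have clamp_id: "x \<in> unit_cube \<Longrightarrow> clamp x = x" for x
    by (simp add: clamp_def unit_cube_def vec_eq_iff)
  have clamp_cont: "continuous_on UNIV clamp"
    unfolding clamp_def by (intro continuous_intros)
  define zv :: "(real^'p) \<times> real \<times> real \<Rightarrow> real^('p + bool)"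
    where "zv u = Zvec (fst u) (fst (snd u)) (snd (snd u))" for u
  have zv_cont: "continuous_on UNIV zv"
  proof -
    have "continuous_on UNIV (\<lambda>u::(real^'p) \<times> real \<times> real. case i of Inl j \<Rightarrow> fst u $ j
          | Inr b \<Rightarrow> (if b then snd (snd u) else fst (snd u)))" for i :: "'p + bool"
    proof (cases i)
      case (Inl j) then show ?thesis by (auto intro!: continuous_intros)
    next
      case (Inr b) then show ?thesis by (cases b) (auto intro!: continuous_intros)
    qed
    then show ?thesis unfolding zv_def Zvec_def by (intro continuous_intros)
  qed
  have XSL_meas: "(\<lambda>w. (X w, S w, L w)) \<in> borel_measurable M"
    using meas by measurable
  have fz_meas: "(\<lambda>w. g (Z w)) \<in> borel_measurable M" if gc: "continuous_on unit_cube g" for g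
  proof -
    have "continuous_on UNIV (g \<circ> (clamp \<circ> zv))"
    proof (rule continuous_on_compose)
      show "continuous_on UNIV (clamp \<circ> zv)"
        by (rule continuous_on_compose[OF zv_cont continuous_on_subset[OF clamp_cont]]) auto
      show "continuous_on ((clamp \<circ> zv) ` UNIV) g"
        by (rule continuous_on_subset[OF gc]) (auto simp: clamp_cube)
    qed
    then have "(g \<circ> (clamp \<circ> zv)) \<in> borel_measurable borel"
      by (rule borel_measurable_continuous_onI)
    then have "(\<lambda>w. (g \<circ> (clamp \<circ> zv)) (X w, S w, L w)) \<in> borel_measurable M"
      using XSL_meas by (rule measurable_compose[rotated])
    moreover have "(g \<circ> (clamp \<circ> zv)) (X w, S w, L w) = g (Z w)" if "w \<in> space M" for w
      using Z_cube that clamp_id by (simp add: zv_def Z_def)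
    ultimately show ?thesis by (simp cong: measurable_cong)
  qed
  have dZ_meas: "(\<lambda>w. \<delta> (Z w)) \<in> borel_measurable M"
    unfolding \<delta>_def using fz_meas[OF h1(3)] fz_meas[OF h0(3)] by measurable
  have dZ_bd: "\<bar>\<delta> (Z w)\<bar> \<le> 2 * B0" if "w \<in> space M" for w
  proof -
    have "\<bar>f0 (Z w)\<bar> \<le> B0" "\<bar>f1 (Z w)\<bar> \<le> B0" using h0(2) h1(2) Z_cube that by auto
    then show ?thesis unfolding \<delta>_def by linarith
  qed
  define c where "c w = (if L w = l then 1 else 0) * psi M S L l (S w)" for w
  have c_meas: "c \<in> borel_measurable M"
    unfolding c_def psi_def using meas by measurable
  define Cb where "Cb = \<bar>psi M S L l 1\<bar> + \<bar>psi M S L l 0\<bar>"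
  have c_bd: "\<bar>c w\<bar> \<le> Cb" if "w \<in> space M" for w
    using S_vals that unfolding c_def Cb_def by auto
  have Cb0: "Cb \<ge> 0" unfolding Cb_def by simp
  have Lset: "{w \<in> space M. L w = l} \<in> sets M" using meas by measurable
  have cp_le: "cprob M S L s l \<le> 1" for s
  proof -
    have "measure M {w \<in> space M. S w = s \<and> L w = l} \<le> measure M {w \<in> space M. L w = l}"
      by (rule P.finite_measure_mono[OF _ Lset]) auto
    then show ?thesis unfolding cprob_def
      by (auto simp: divide_le_eq_1 less_le)
  qed
  have cp1: "cprob M S L 1 l > 0" and cp0: "cprob M S L 0 l > 0"
    using C1 l_in by force+
  have c_vals: "c w = 0 \<or> c w \<ge> 1 \<or> c w \<le> -1" if "w \<in> space M" for w
  proof -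
    have "S w = 0 \<or> S w = 1" using S_vals that by auto
    moreover have "1 / cprob M S L 1 l \<ge> 1" using cp1 cp_le[of 1] by simp
    moreover have "1 / cprob M S L 0 l \<ge> 1" using cp0 cp_le[of 0] by simp
    ultimately show ?thesis unfolding c_def psi_def by auto
  qed
  define gi where "gi \<omega> w = (if \<delta> (Z w) - \<omega> * c w > 0 then 1 else 0) * c w" for \<omega> w
  define vi where "vi \<omega> w = (if \<delta> (Z w) - \<omega> * c w > 0 then 1 else 0) * \<delta> (Z w)" for \<omega> w
  have G_eq: "Gfun M S L Z f l \<omega> = integral\<^sup>L M (gi \<omega>)" for \<omega>
    unfolding Gfun_def gi_def c_def
    by (rule Bochner_Integration.integral_cong[OF refl]) (use f_dec in \<open>auto simp: mult.assoc\<close>)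
  have V_eq: "Vfun M Z f \<delta> \<omega> = integral\<^sup>L M (vi \<omega>)" for \<omega>
    unfolding Vfun_def vi_def c_def
    by (rule Bochner_Integration.integral_cong[OF refl]) (use f_dec in \<open>auto simp: mult.assoc\<close>)
  have gi_int: "integrable M (gi \<omega>)" for \<omega>
  proof (rule P.integrable_const_bound[where B=Cb])
    show "AE x in M. norm (gi \<omega> x) \<le> Cb"
      using c_bd Cb0 by (intro AE_I2) (auto simp: gi_def)
    show "gi \<omega> \<in> borel_measurable M"
      unfolding gi_def using dZ_meas c_meas by measurable
  qed
  have vi_int: "integrable M (vi \<omega>)" for \<omega>
  proof (rule P.integrable_const_bound[where B="2 * B0"])
    show "AE x in M. norm (vi \<omega> x) \<le> 2 * B0"
      using dZ_bd h0(1) by (intro AE_I2) (auto simp: vi_def)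
    show "vi \<omega> \<in> borel_measurable M"
      unfolding vi_def using dZ_meas c_meas by measurable
  qed
  have Gmono: "Gfun M S L Z f l \<omega>2 \<le> Gfun M S L Z f l \<omega>1" if "\<omega>1 \<le> \<omega>2" for \<omega>1 \<omega>2
    unfolding G_eq by (rule integral_mono[OF gi_int gi_int]) (unfold gi_def, rule Gpt[OF that])
  have Vm1: "Vfun M Z f \<delta> \<omega>1 \<le> Vfun M Z f \<delta> \<omega>2" if "\<omega>1 \<le> \<omega>2" "\<omega>2 \<le> 0" for \<omega>1 \<omega>2
    unfolding V_eq by (rule integral_mono[OF vi_int vi_int]) (unfold vi_def, rule Vneg[OF that])
  have Vm2: "Vfun M Z f \<delta> \<omega>2 \<le> Vfun M Z f \<delta> \<omega>1" if "0 < \<omega>1" "\<omega>1 \<le> \<omega>2" for \<omega>1 \<omega>2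
    unfolding V_eq by (rule integral_mono[OF vi_int vi_int]) (unfold vi_def, rule Vpos[OF that])
  define K0 where "K0 = 2 * B0 + 1"
  have K0: "K0 > 0" using h0(1) by (simp add: K0_def)
  have GK: "Gfun M S L Z f l K0 \<le> 0"
  proof -
    have "AE w in M. gi K0 w \<le> 0"
    proof (rule AE_I2)
      fix w assume w: "w \<in> space M"
      show "gi K0 w \<le> 0" unfolding gi_def
        by (rule Gbig[OF c_vals[OF w] dZ_bd[OF w]]) (simp add: K0_def)
    qed
    then have "integral\<^sup>L M (gi K0) \<le> integral\<^sup>L M (\<lambda>_. 0)"
      by (intro integral_mono_AE[OF gi_int]) auto
    then show ?thesis by (simp add: G_eq)
  qed
  have GmK: "Gfun M S L Z f l (- K0) \<ge> 0"
  proof -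
    have "AE w in M. 0 \<le> gi (- K0) w"
    proof (rule AE_I2)
      fix w assume w: "w \<in> space M"
      show "0 \<le> gi (- K0) w" unfolding gi_def
        by (rule Gsmall[OF c_vals[OF w] dZ_bd[OF w]]) (simp add: K0_def)
    qed
    then have "integral\<^sup>L M (\<lambda>_. 0) \<le> integral\<^sup>L M (gi (- K0))"
      by (intro integral_mono_AE[OF _ gi_int]) auto
    then show ?thesis by (simp add: G_eq)
  qed
  have Gc: "continuous_on {a..b} (Gfun M S L Z f l)" for a b
    using G_cont by (rule continuous_on_subset) auto
  have ex: "\<exists>K > 0.
         (Gfun M S L Z f l 0 > \<epsilon> \<longrightarrow> (\<exists>\<omega>\<in>{0<..<K}. Gfun M S L Z f l \<omega> = \<epsilon>))
       \<and> (Gfun M S L Z f l 0 < - \<epsilon> \<longrightarrow> (\<exists>\<omega>\<in>{-K<..<0}. Gfun M S L Z f l \<omega> = - \<epsilon>))"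
  proof (intro exI[of _ "K0 + 1"] conjI impI)
    show "K0 + 1 > 0" using K0 by simp
  next
    assume g0: "Gfun M S L Z f l 0 > \<epsilon>"
    obtain x where x: "0 \<le> x" "x \<le> K0" "Gfun M S L Z f l x = \<epsilon>"
      using IVT2'[of "Gfun M S L Z f l" K0 \<epsilon> 0, OF _ _ _ Gc] GK g0 eps K0 by auto
    have "x \<noteq> 0" using x g0 by auto
    then show "\<exists>\<omega>\<in>{0<..<K0 + 1}. Gfun M S L Z f l \<omega> = \<epsilon>" using x by auto
  next
    assume g0: "Gfun M S L Z f l 0 < - \<epsilon>"
    obtain x where x: "- K0 \<le> x" "x \<le> 0" "Gfun M S L Z f l x = - \<epsilon>"
      using IVT2'[of "Gfun M S L Z f l" 0 "- \<epsilon>" "- K0", OF _ _ _ Gc] GmK g0 eps K0 by auto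
    have "x \<noteq> 0" using x g0 by auto
    then show "\<exists>\<omega>\<in>{- (K0 + 1)<..<0}. Gfun M S L Z f l \<omega> = - \<epsilon>" using x by auto
  qed
  show ?thesis using Gmono Vm1 Vm2 ex by blast
qed

end
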